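(* Let $k=k(n)$ be the number of top order statistics used, let $\alpha(k)$ satisfy $0<\alpha(k)\le k$ and $\varDelta:=\lim_{k\to\infty}\alpha(k)/k$ with $0<\varDelta\le 1$, let $\theta_1,\dots,\theta_k$ be i.i.d. $U(0,1)$, and assume the second-order parameter $\rho<0$ is estimated by a consistent estimator $\hat\rho$. Then, as $k\to\infty$ and $k/n\to 0$, almost surely with respect to the law of $(\theta_j)$: (i) $S_1(\theta)=\sum_{j=1}^k \tilde W_j C_j \to \frac{1}{1-\rho}$; (ii) $S_2(\theta)=\sum_{j=1}^k \tilde W_j C_j^2-\big(\sum_{j=1}^k \tilde W_j C_j\big)^2\to \frac{\rho^2}{(1-2\rho)(1-\rho)^2}$; (iii) $\dot S(\theta)=\sum_{j=1}^k \tilde W_j^2\,(S_1(\theta)-C_j)\to 0$; (iv) $\ddot S(\theta)=\sum_{j=1}^k \tilde W_j^2\,(S_1(\theta)-C_j)^2\to 0$.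
   Context: For $j=1,\dots,k$: the random weights are $W_j=1-\theta_j^{\alpha(k)}\frac{j}{k+1}$, the normalised weights are $\tilde W_j=W_j/\sum_{i=1}^k W_i$, and the covariates are $C_j=\left(\frac{j}{k+1}\right)^{-\rho}$ with $\rho<0$ (computed in practice with the estimate $\hat\rho$). The $\theta_j$ are independent of the data. Throughout the paper the standing assumption $0<\varDelta\le 1$ on $\varDelta=\lim_{k\to\infty}\alpha(k)/k$ is made. *)

theory Defs
  imports "HOL-Probability.Probability"
begin

text \<open>Random weights W_j = 1 - theta_j^(alpha(k)) * j/(k+1), j = 1..k.
  The sequence theta is indexed from 1 (theta 1, ..., theta k are used).\<close>
definition W :: "(nat \<Rightarrow> real) \<Rightarrow> (nat \<Rightarrow> real) \<Rightarrow> nat \<Rightarrow> nat \<Rightarrow> real" where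
  "W \<alpha> \<theta> k j = 1 - (\<theta> j) powr (\<alpha> k) * (real j / (real k + 1))"

definition Wt :: "(nat \<Rightarrow> real) \<Rightarrow> (nat \<Rightarrow> real) \<Rightarrow> nat \<Rightarrow> nat \<Rightarrow> real" where
  "Wt \<alpha> \<theta> k j = W \<alpha> \<theta> k j / (\<Sum>i=1..k. W \<alpha> \<theta> k i)"

definition Cov :: "real \<Rightarrow> nat \<Rightarrow> nat \<Rightarrow> real" where
  "Cov r k j = (real j / (real k + 1)) powr (- r)"

definition S1 :: "(nat \<Rightarrow> real) \<Rightarrow> real \<Rightarrow> (nat \<Rightarrow> real) \<Rightarrow> nat \<Rightarrow> real" where
  "S1 \<alpha> r \<theta> k = (\<Sum>j=1..k. Wt \<alpha> \<theta> k j * Cov r k j)"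

definition S2 :: "(nat \<Rightarrow> real) \<Rightarrow> real \<Rightarrow> (nat \<Rightarrow> real) \<Rightarrow> nat \<Rightarrow> real" where
  "S2 \<alpha> r \<theta> k = (\<Sum>j=1..k. Wt \<alpha> \<theta> k j * (Cov r k j)^2) - (S1 \<alpha> r \<theta> k)^2"

definition Sdot :: "(nat \<Rightarrow> real) \<Rightarrow> real \<Rightarrow> (nat \<Rightarrow> real) \<Rightarrow> nat \<Rightarrow> real" where
  "Sdot \<alpha> r \<theta> k = (\<Sum>j=1..k. (Wt \<alpha> \<theta> k j)^2 * (S1 \<alpha> r \<theta> k - Cov r k j))"

definition Sddot :: "(nat \<Rightarrow> real) \<Rightarrow> real \<Rightarrow> (nat \<Rightarrow> real) \<Rightarrow> nat \<Rightarrow> real" where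
  "Sddot \<alpha> r \<theta> k = (\<Sum>j=1..k. (Wt \<alpha> \<theta> k j)^2 * (S1 \<alpha> r \<theta> k - Cov r k j)^2)"

end

theory Submission
  imports Defs
begin


lemma tangent_powr:
  fixes p x y :: real
  assumes p: "p \<ge> 1" and x: "x > 0" and y: "y \<ge> 0"
  shows "x powr p + p * x powr (p - 1) * (y - x) \<le> y powr p"
proof -
  have der: "\<And>z. z > 0 \<Longrightarrow> ((\<lambda>z. z powr p) has_real_derivative p * z powr (p - 1)) (at z)"
    by (rule has_real_derivative_powr)
  consider "y = x" | "x < y" | "0 < y \<and> y < x" | "y = 0" using x y by linarith
  then show ?thesis
  proof cases
    case 1 then show ?thesis by simp
  next
    case 2
    obtain z where z: "x < z" "z < y" "y powr p - x powr p = (y - x) * (p * z powr (p - 1))"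
      using MVT2[OF 2, of "\<lambda>z. z powr p" "\<lambda>z. p * z powr (p - 1)"] der x by force
    have "x powr (p - 1) \<le> z powr (p - 1)"
      using z x p by (intro powr_mono2) auto
    then have "p * x powr (p - 1) * (y - x) \<le> p * z powr (p - 1) * (y - x)"
      using 2 p by (intro mult_right_mono mult_left_mono) auto
    then show ?thesis using z by (simp add: algebra_simps)
  next
    case 3
    obtain z where z: "y < z" "z < x" "x powr p - y powr p = (x - y) * (p * z powr (p - 1))"
      using MVT2[of y x "\<lambda>z. z powr p" "\<lambda>z. p * z powr (p - 1)"] der 3 by force
    have "z powr (p - 1) \<le> x powr (p - 1)"
      using z 3 p by (intro powr_mono2) auto
    then have "p * z powr (p - 1) * (x - y) \<le> p * x powr (p - 1) * (x - y)"
      using 3 p by (intro mult_right_mono mult_left_mono) auto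
    then show ?thesis using z by (simp add: algebra_simps)
  next
    case 4
    have "x powr (p - 1) * x powr 1 = x powr p" by (subst powr_add[symmetric]) simp
    then have "x powr p = x powr (p - 1) * x" using x by simp
    moreover have "x powr (p - 1) * x * (1 - p) \<le> 0"
      using x p by (intro mult_nonneg_nonpos) auto
    ultimately show ?thesis using 4 by (simp add: algebra_simps)
  qed
qed

lemma div_aux: fixes A B C p :: real
  assumes "p > 0" "A \<le> B + p * C" shows "A / p \<le> B / p + C"
proof -
  have "A / p \<le> (B + p * C) / p" using assms by (intro divide_right_mono) auto
  also have "\<dots> = B / p + C" using assms by (simp add: field_simps)
  finally show ?thesis .
qed

lemma sum_powr_lower:
  fixes s :: real assumes s: "s > 0"
  shows "real k powr (s + 1) / (s + 1) \<le> (\<Sum>j=1..k. real j powr s)"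
proof (induction k)
  case 0 then show ?case by simp
next
  case (Suc k)
  have t: "real (Suc k) powr (s + 1) + (s + 1) * real (Suc k) powr s * (real k - real (Suc k)) \<le> real k powr (s + 1)"
    using tangent_powr[of "s + 1" "real (Suc k)" "real k"] s by simp
  have "real (Suc k) powr (s + 1) / (s + 1) \<le> real k powr (s + 1) / (s + 1) + real (Suc k) powr s"
    using t s by (intro div_aux) (auto simp: algebra_simps)
  also have "\<dots> \<le> (\<Sum>j=1..k. real j powr s) + real (Suc k) powr s" using Suc by simp
  also have "\<dots> = (\<Sum>j=1..Suc k. real j powr s)" by simp
  finally show ?case .
qed

lemma sum_powr_upper:
  fixes s :: real assumes s: "s > 0"
  shows "(\<Sum>j=1..k. real j powr s) \<le> real (Suc k) powr (s + 1) / (s + 1)"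
proof (induction k)
  case 0 then show ?case using s by simp
next
  case (Suc k)
  have t: "real (Suc k) powr (s + 1) + (s + 1) * real (Suc k) powr s * (real (Suc (Suc k)) - real (Suc k)) \<le> real (Suc (Suc k)) powr (s + 1)"
    using tangent_powr[of "s + 1" "real (Suc k)" "real (Suc (Suc k))"] s by simp
  have "(\<Sum>j=1..Suc k. real j powr s) = (\<Sum>j=1..k. real j powr s) + real (Suc k) powr s" by simp
  also have "\<dots> \<le> real (Suc k) powr (s + 1) / (s + 1) + real (Suc k) powr s" using Suc by simp
  also have "\<dots> \<le> real (Suc (Suc k)) powr (s + 1) / (s + 1)"
    using t s div_aux[of "s+1" "real (Suc k) powr (s + 1)" "real (Suc (Suc k)) powr (s + 1)" "-(real (Suc k) powr s)"] by (auto simp: algebra_simps)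
  finally show ?case .
qed

lemma cancel_aux: "X \<noteq> 0 \<Longrightarrow> (X * K / p) / X / k = K / k / (p::real)"
  by simp

lemma cancel_aux2: "k \<noteq> 0 \<Longrightarrow> (Y * k / p) / X / k = (Y / X) / (p::real)"
  by simp

lemma riemann_bounds:
  fixes s :: real assumes s: "s > 0" and k: "k \<ge> 1"
  shows "(real k / real (Suc k)) powr s / (s + 1) \<le> (\<Sum>j=1..k. (real j / (real k + 1)) powr s) / real k"
    and "(\<Sum>j=1..k. (real j / (real k + 1)) powr s) / real k \<le> real (Suc k) / real k / (s + 1)"
proof -
  define K where "K = real k + 1"
  have K: "K > 0" "real (Suc k) = K" by (auto simp: K_def)
  have kpos: "real k > 0" using k by simp
  have eq: "(\<Sum>j=1..k. (real j / (real k + 1)) powr s) = (\<Sum>j=1..k. real j powr s) / K powr s"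
    unfolding K_def[symmetric] by (simp add: powr_divide sum_divide_distrib)
  have Kp: "K powr (s + 1) = K powr s * K" using K by (simp add: powr_add)
  have kp: "real k powr (s + 1) = real k powr s * real k" using kpos by (simp add: powr_add)
  have Ks: "K powr s > 0" using K by simp
  have "(\<Sum>j=1..k. real j powr s) \<le> K powr s * K / (s + 1)"
    using sum_powr_upper[OF s, of k] K Kp by simp
  then have "(\<Sum>j=1..k. real j powr s) / K powr s / real k \<le> (K powr s * K / (s + 1)) / K powr s / real k"
    using Ks kpos by (intro divide_right_mono) auto
  also have "\<dots> = K / real k / (s + 1)" using Ks by (intro cancel_aux) simp
  finally show "(\<Sum>j=1..k. (real j / (real k + 1)) powr s) / real k \<le> real (Suc k) / real k / (s + 1)"
    using eq K by simp
  have "real k powr s * real k / (s + 1) \<le> (\<Sum>j=1..k. real j powr s)"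
    using sum_powr_lower[OF s, of k] kp by simp
  then have "(real k powr s * real k / (s + 1)) / K powr s / real k \<le> (\<Sum>j=1..k. real j powr s) / K powr s / real k"
    using Ks kpos by (intro divide_right_mono) auto
  moreover have "(real k powr s * real k / (s + 1)) / K powr s / real k = (real k / K) powr s / (s + 1)"
    using Ks kpos K by (simp add: cancel_aux2 powr_divide)
  ultimately show "(real k / real (Suc k)) powr s / (s + 1) \<le> (\<Sum>j=1..k. (real j / (real k + 1)) powr s) / real k"
    using eq K by simp
qed

lemma riemann_lim:
  fixes s :: "nat \<Rightarrow> real"
  assumes s: "s \<longlonglongrightarrow> s0" and s0: "s0 > 0"
  shows "(\<lambda>k. (\<Sum>j=1..k. (real j / (real k + 1)) powr s k) / real k) \<longlonglongrightarrow> 1 / (s0 + 1)"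
proof (rule tendsto_sandwich)
  have ev: "eventually (\<lambda>k. s k > 0 \<and> k \<ge> 1) sequentially"
    using order_tendstoD(1)[OF s s0] eventually_ge_at_top[of 1] by eventually_elim auto
  show "eventually (\<lambda>k. (real k / real (Suc k)) powr s k / (s k + 1) \<le> (\<Sum>j=1..k. (real j / (real k + 1)) powr s k) / real k) sequentially"
    using ev by eventually_elim (use riemann_bounds in auto)
  show "eventually (\<lambda>k. (\<Sum>j=1..k. (real j / (real k + 1)) powr s k) / real k \<le> real (Suc k) / real k / (s k + 1)) sequentially"
    using ev by eventually_elim (use riemann_bounds in auto)
  have "(\<lambda>k. (real k / real (Suc k)) powr s k) \<longlonglongrightarrow> 1 powr s0"
    by (intro tendsto_powr s LIMSEQ_n_over_Suc_n) auto
  then show "(\<lambda>k. (real k / real (Suc k)) powr s k / (s k + 1)) \<longlonglongrightarrow> 1 / (s0 + 1)"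
    using s0 by (auto intro!: tendsto_intros s)
  show "(\<lambda>k. real (Suc k) / real k / (s k + 1)) \<longlonglongrightarrow> 1 / (s0 + 1)"
    by (rule tendsto_divide[OF LIMSEQ_Suc_n_over_n tendsto_add[OF s tendsto_const]]) (use s0 in auto)
qed

lemma W_sum: "(\<Sum>j=1..k. W a t k j) = real k - (\<Sum>j=1..k. t j powr a k * (real j / (real k + 1)))"
  by (simp add: W_def sum_subtractf)

lemma Wt_sum_c: "(\<Sum>j=1..k. Wt a t k j * c j) = (\<Sum>j=1..k. W a t k j * c j) / (\<Sum>j=1..k. W a t k j)"
  by (simp add: Wt_def sum_divide_distrib)

lemma eps_bounds:
  assumes "0 \<le> x" "x \<le> 1" "0 < b" "1 \<le> j" "j \<le> k"
  shows "0 \<le> x powr b * (real j / (real k + 1))" "x powr b * (real j / (real k + 1)) \<le> x powr b"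
    "x powr b * (real j / (real k + 1)) < 1"
proof -
  have f: "real j / (real k + 1) < 1" "0 \<le> real j / (real k + 1)" using assms by auto
  have p: "0 \<le> x powr b" "x powr b \<le> 1" using assms by (auto intro: powr_le1)
  show "0 \<le> x powr b * (real j / (real k + 1))" using f p by simp
  show "x powr b * (real j / (real k + 1)) \<le> x powr b" using f p mult_left_le[of "real j / (real k + 1)" "x powr b"] by simp
  have "x powr b * (real j / (real k + 1)) \<le> 1 * (real j / (real k + 1))"
    using f p by (intro mult_right_mono) auto
  then show "x powr b * (real j / (real k + 1)) < 1" using f by linarith
qed

lemma W_bounds:
  assumes "0 \<le> t j" "t j \<le> 1" "0 < a k" "1 \<le> j" "j \<le> k"
  shows "0 < W a t k j" "W a t k j \<le> 1"
  using eps_bounds[OF assms] unfolding W_def by auto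

locale detsetup =
  fixes t :: "nat \<Rightarrow> real" and a :: "nat \<Rightarrow> real"
  assumes t01: "\<And>j. 0 \<le> t j \<and> t j \<le> 1"
    and apos: "\<And>k. k \<ge> 1 \<Longrightarrow> 0 < a k"
    and Alim: "(\<lambda>k. (\<Sum>j=1..k. t j powr a k) / real k) \<longlonglongrightarrow> 0"
begin

definition E where "E k = (\<Sum>j=1..k. t j powr a k * (real j / (real k + 1)))"
definition SW where "SW k = (\<Sum>j=1..k. W a t k j)"

lemma E_lim: "(\<lambda>k. E k / real k) \<longlonglongrightarrow> 0"
proof (rule tendsto_sandwich[OF _ _ tendsto_const Alim])
  show "eventually (\<lambda>k. 0 \<le> E k / real k) sequentially"
    unfolding E_def by (intro always_eventually allI divide_nonneg_nonneg sum_nonneg mult_nonneg_nonneg) auto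
  show "eventually (\<lambda>k. E k / real k \<le> (\<Sum>j=1..k. t j powr a k) / real k) sequentially"
    unfolding E_def by (intro always_eventually allI divide_right_mono sum_mono mult_left_le) auto
qed

lemma SW_eq: "SW k = real k - E k"
  unfolding SW_def E_def by (rule W_sum)

lemma SW_lim: "(\<lambda>k. SW k / real k) \<longlonglongrightarrow> 1"
proof -
  have "(\<lambda>k. 1 - E k / real k) \<longlonglongrightarrow> 1 - 0" by (intro tendsto_intros E_lim)
  moreover have "eventually (\<lambda>k. 1 - E k / real k = SW k / real k) sequentially"
    using eventually_ge_at_top[of 1] by eventually_elim (auto simp: SW_eq field_simps)
  ultimately have "(\<lambda>k. SW k / real k) \<longlonglongrightarrow> 1 - 0" by (rule Lim_transform_eventually)
  then show ?thesis by simp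
qed

lemma SW_pos: "eventually (\<lambda>k. SW k > 0) sequentially"
proof -
  have "eventually (\<lambda>k. SW k / real k > 0) sequentially"
    using order_tendstoD(1)[OF SW_lim, of 0] by simp
  then show ?thesis using eventually_ge_at_top[of 1]
    by eventually_elim (auto simp: zero_less_divide_iff)
qed

lemma inv_SW_lim: "(\<lambda>k. 1 / SW k) \<longlonglongrightarrow> 0"
proof -
  have "(\<lambda>k. (1 / real k) / (SW k / real k)) \<longlonglongrightarrow> 0 / 1"
    by (intro tendsto_divide SW_lim lim_1_over_n) auto
  moreover have "eventually (\<lambda>k. (1 / real k) / (SW k / real k) = 1 / SW k) sequentially"
    using eventually_ge_at_top[of 1] by eventually_elim auto
  ultimately have "(\<lambda>k. 1 / SW k) \<longlonglongrightarrow> 0 / 1" by (rule Lim_transform_eventually)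
  then show ?thesis by simp
qed

lemma G:
  fixes c :: "nat \<Rightarrow> nat \<Rightarrow> real"
  assumes c01: "eventually (\<lambda>k. \<forall>j\<in>{1..k}. 0 \<le> c k j \<and> c k j \<le> 1) sequentially"
    and clim: "(\<lambda>k. (\<Sum>j=1..k. c k j) / real k) \<longlonglongrightarrow> L"
  shows "(\<lambda>k. \<Sum>j=1..k. Wt a t k j * c k j) \<longlonglongrightarrow> L"
proof -
  define F where "F k = (\<Sum>j=1..k. t j powr a k * (real j / (real k + 1)) * c k j)" for k
  have Flim: "(\<lambda>k. F k / real k) \<longlonglongrightarrow> 0"
  proof (rule tendsto_sandwich[OF _ _ tendsto_const E_lim])
    show "eventually (\<lambda>k. 0 \<le> F k / real k) sequentially"
      using c01 eventually_ge_at_top[of 1]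
    proof eventually_elim
      case (elim k)
      then show ?case unfolding F_def using eps_bounds(1) t01 apos
        by (intro divide_nonneg_nonneg sum_nonneg mult_nonneg_nonneg) auto
    qed
    show "eventually (\<lambda>k. F k / real k \<le> E k / real k) sequentially"
      using c01 eventually_ge_at_top[of 1]
    proof eventually_elim
      case (elim k)
      then show ?case unfolding F_def E_def using eps_bounds(1) t01 apos
        by (intro divide_right_mono sum_mono mult_left_le) auto
    qed
  qed
  have num: "(\<Sum>j=1..k. W a t k j * c k j) = (\<Sum>j=1..k. c k j) - F k" for k
    by (simp add: F_def W_def sum_subtractf left_diff_distrib)
  have "(\<lambda>k. ((\<Sum>j=1..k. c k j) / real k - F k / real k) / (SW k / real k)) \<longlonglongrightarrow> (L - 0) / 1"
    by (intro tendsto_intros clim Flim SW_lim) auto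
  moreover have "eventually (\<lambda>k. ((\<Sum>j=1..k. c k j) / real k - F k / real k) / (SW k / real k)
     = (\<Sum>j=1..k. Wt a t k j * c k j)) sequentially"
    using eventually_ge_at_top[of 1]
  proof eventually_elim
    case (elim k)
    then have "real k \<noteq> 0" by simp
    then show ?case unfolding Wt_sum_c num SW_def
      by (simp add: diff_divide_distrib[symmetric])
  qed
  ultimately have "(\<lambda>k. \<Sum>j=1..k. Wt a t k j * c k j) \<longlonglongrightarrow> (L - 0) / 1" by (rule Lim_transform_eventually)
  then show ?thesis by simp
qed

lemma Wt_sq_bound:
  assumes k: "k \<ge> 1" and SWp: "SW k > 0"
  shows "(\<Sum>j=1..k. (Wt a t k j)^2) \<le> 1 / SW k"
proof -
  have "(\<Sum>j=1..k. (Wt a t k j)^2) = (\<Sum>j=1..k. (W a t k j)^2 / (SW k)^2)"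
    by (simp add: Wt_def SW_def power_divide)
  also have "\<dots> \<le> (\<Sum>j=1..k. W a t k j / (SW k)^2)"
  proof (intro sum_mono divide_right_mono)
    fix j assume j: "j \<in> {1..k}"
    have "0 < W a t k j" "W a t k j \<le> 1" using W_bounds[of t j a k] t01 apos[OF k] j by auto
    then show "(W a t k j)^2 \<le> W a t k j" by (simp add: power2_eq_square mult_left_le)
  qed simp
  also have "\<dots> = SW k / (SW k)^2" by (simp add: SW_def sum_divide_distrib)
  also have "\<dots> = 1 / SW k" using SWp by (simp add: power2_eq_square)
  finally show ?thesis .
qed

lemma S1_01:
  assumes k: "k \<ge> 1" and SWp: "SW k > 0" and c: "\<forall>j\<in>{1..k}. 0 \<le> c j \<and> c j \<le> 1"
  shows "0 \<le> (\<Sum>j=1..k. Wt a t k j * c j) \<and> (\<Sum>j=1..k. Wt a t k j * c j) \<le> 1"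
proof -
  have Wb: "\<And>j. j \<in> {1..k} \<Longrightarrow> 0 \<le> W a t k j \<and> W a t k j \<le> 1"
    using W_bounds[of t _ a k] t01 apos[OF k] by (auto simp: less_imp_le)
  have "0 \<le> (\<Sum>j=1..k. W a t k j * c j)" using Wb c by (intro sum_nonneg) auto
  moreover have "(\<Sum>j=1..k. W a t k j * c j) \<le> SW k"
    unfolding SW_def using Wb c by (intro sum_mono) (auto intro: mult_left_le)
  ultimately show ?thesis unfolding Wt_sum_c SW_def[symmetric] using SWp by auto
qed

lemma det_main:
  fixes r :: "nat \<Rightarrow> real" and \<rho> :: real
  assumes r: "r \<longlonglongrightarrow> \<rho>" and \<rho>: "\<rho> < 0"
  shows "(\<lambda>k. S1 a (r k) t k) \<longlonglongrightarrow> 1 / (1 - \<rho>) \<and>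
     (\<lambda>k. S2 a (r k) t k) \<longlonglongrightarrow> \<rho>^2 / ((1 - 2*\<rho>) * (1 - \<rho>)^2) \<and>
     (\<lambda>k. Sdot a (r k) t k) \<longlonglongrightarrow> 0 \<and>
     (\<lambda>k. Sddot a (r k) t k) \<longlonglongrightarrow> 0"
proof -
  have mr: "(\<lambda>k. - r k) \<longlonglongrightarrow> - \<rho>" by (intro tendsto_intros r)
  have "0 < - \<rho>" using \<rho> by simp
  have ev: "eventually (\<lambda>k. - r k > 0 \<and> k \<ge> 1 \<and> SW k > 0) sequentially"
    using order_tendstoD(1)[OF mr, of 0, OF \<open>0 < - \<rho>\<close>] eventually_ge_at_top[of 1] SW_pos
    by eventually_elim auto
  have c01: "0 \<le> Cov (r k) k j \<and> Cov (r k) k j \<le> 1" if "- r k > 0" "j \<in> {1..k}" for k j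
    using that unfolding Cov_def by (auto intro!: powr_le1)
  have c2: "(Cov (r k) k j)^2 = (real j / (real k + 1)) powr (2 * - r k)" if "j \<in> {1..k}" for k j
    using that unfolding Cov_def power2_eq_square by (simp add: powr_add[symmetric])
  have evc: "eventually (\<lambda>k. \<forall>j\<in>{1..k}. 0 \<le> Cov (r k) k j \<and> Cov (r k) k j \<le> 1) sequentially"
    using ev by eventually_elim (use c01 in auto)
  have evc2: "eventually (\<lambda>k. \<forall>j\<in>{1..k}. 0 \<le> (Cov (r k) k j)^2 \<and> (Cov (r k) k j)^2 \<le> 1) sequentially"
    using ev by eventually_elim (use c01 in \<open>auto intro: power_le_one\<close>)
  have l1: "(\<lambda>k. (\<Sum>j=1..k. Cov (r k) k j) / real k) \<longlonglongrightarrow> 1 / (- \<rho> + 1)"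
    unfolding Cov_def by (rule riemann_lim[OF mr]) (use \<rho> in auto)
  have "(\<lambda>k. (\<Sum>j=1..k. (real j / (real k + 1)) powr (2 * - r k)) / real k) \<longlonglongrightarrow> 1 / (2 * - \<rho> + 1)"
    by (rule riemann_lim) (use \<rho> r in \<open>auto intro!: tendsto_intros\<close>)
  moreover have "(\<Sum>j=1..k. (real j / (real k + 1)) powr (2 * - r k)) = (\<Sum>j=1..k. (Cov (r k) k j)^2)" for k
    using c2 by (intro sum.cong) auto
  ultimately have l2: "(\<lambda>k. (\<Sum>j=1..k. (Cov (r k) k j)^2) / real k) \<longlonglongrightarrow> 1 / (2 * - \<rho> + 1)"
    by simp
  have S1lim: "(\<lambda>k. S1 a (r k) t k) \<longlonglongrightarrow> 1 / (1 - \<rho>)"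
    using G[OF evc l1] unfolding S1_def by simp
  have T2: "(\<lambda>k. \<Sum>j=1..k. Wt a t k j * (Cov (r k) k j)^2) \<longlonglongrightarrow> 1 / (2 * - \<rho> + 1)"
    using G[OF evc2 l2] .
  have "(\<lambda>k. S2 a (r k) t k) \<longlonglongrightarrow> 1 / (2 * - \<rho> + 1) - (1 / (1 - \<rho>))^2"
    unfolding S2_def by (intro tendsto_intros T2 S1lim)
  moreover have "1 / (2 * - \<rho> + 1) - (1 / (1 - \<rho>))^2 = \<rho>^2 / ((1 - 2*\<rho>) * (1 - \<rho>)^2)"
  proof -
    have h: "1 - \<rho> \<noteq> 0" "2 * - \<rho> + 1 \<noteq> 0" "1 - 2*\<rho> \<noteq> 0" using \<rho> by auto
    have "2 * - \<rho> + 1 = 1 - 2*\<rho>" by simp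
    then have "1 / (2 * - \<rho> + 1) - (1 / (1 - \<rho>))^2 = 1 / (1 - 2*\<rho>) - 1 / (1 - \<rho>)^2"
      by (simp add: power_divide)
    also have "\<dots> = ((1 - \<rho>)^2 - (1 - 2*\<rho>)) / ((1 - 2*\<rho>) * (1 - \<rho>)^2)"
      using h by (simp add: diff_frac_eq)
    also have "(1 - \<rho>)^2 - (1 - 2*\<rho>) = \<rho>^2" by (simp add: power2_eq_square algebra_simps)
    finally show ?thesis .
  qed
  ultimately have S2lim: "(\<lambda>k. S2 a (r k) t k) \<longlonglongrightarrow> \<rho>^2 / ((1 - 2*\<rho>) * (1 - \<rho>)^2)" by simp
  have bnd: "eventually (\<lambda>k. \<bar>Sdot a (r k) t k\<bar> \<le> 1 / SW k \<and> 0 \<le> Sddot a (r k) t k \<and> Sddot a (r k) t k \<le> 1 / SW k) sequentially"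
    using ev
  proof eventually_elim
    case (elim k)
    then have k: "k \<ge> 1" and SWp: "SW k > 0" and rk: "- r k > 0" by auto
    have s01: "0 \<le> S1 a (r k) t k \<and> S1 a (r k) t k \<le> 1"
      unfolding S1_def by (rule S1_01[OF k SWp]) (use c01[OF rk] in auto)
    have d: "\<bar>S1 a (r k) t k - Cov (r k) k j\<bar> \<le> 1" if "j \<in> {1..k}" for j
      using s01 c01[OF rk that] by auto
    have sq: "(Wt a t k j)^2 * (S1 a (r k) t k - Cov (r k) k j)^2 \<le> (Wt a t k j)^2" if "j \<in> {1..k}" for j
    proof -
      have "(S1 a (r k) t k - Cov (r k) k j)^2 \<le> 1"
        using d[OF that] by (simp add: abs_le_square_iff[symmetric] abs_square_le_1)
      then show ?thesis by (intro mult_left_le) auto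
    qed
    have "\<bar>Sdot a (r k) t k\<bar> \<le> (\<Sum>j=1..k. \<bar>(Wt a t k j)^2 * (S1 a (r k) t k - Cov (r k) k j)\<bar>)"
      unfolding Sdot_def by (rule sum_abs)
    also have "\<dots> \<le> (\<Sum>j=1..k. (Wt a t k j)^2)"
      using d by (intro sum_mono) (auto simp: abs_mult intro: mult_left_le)
    also have "\<dots> \<le> 1 / SW k" by (rule Wt_sq_bound[OF k SWp])
    finally have A: "\<bar>Sdot a (r k) t k\<bar> \<le> 1 / SW k" .
    have "Sddot a (r k) t k \<le> (\<Sum>j=1..k. (Wt a t k j)^2)"
      unfolding Sddot_def using sq by (intro sum_mono) auto
    also have "\<dots> \<le> 1 / SW k" by (rule Wt_sq_bound[OF k SWp])
    finally have B: "Sddot a (r k) t k \<le> 1 / SW k" .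
    have C: "0 \<le> Sddot a (r k) t k" unfolding Sddot_def by (intro sum_nonneg) auto
    show ?case using A B C by auto
  qed
  have "(\<lambda>k. \<bar>Sdot a (r k) t k\<bar>) \<longlonglongrightarrow> 0"
    by (rule tendsto_sandwich[OF _ _ tendsto_const inv_SW_lim]) (use bnd in \<open>auto elim: eventually_mono\<close>)
  then have Sdlim: "(\<lambda>k. Sdot a (r k) t k) \<longlonglongrightarrow> 0" by (rule tendsto_rabs_zero_cancel)
  have Sddlim: "(\<lambda>k. Sddot a (r k) t k) \<longlonglongrightarrow> 0"
    by (rule tendsto_sandwich[OF _ _ tendsto_const inv_SW_lim]) (use bnd in \<open>auto elim: eventually_mono\<close>)
  show ?thesis using S1lim S2lim Sdlim Sddlim by blast
qed

end




locale unif_setup = prob_space M for M :: "'a measure" +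
  fixes \<theta> :: "nat \<Rightarrow> 'a \<Rightarrow> real"
  assumes ind: "indep_vars (\<lambda>_. borel) \<theta> UNIV"
    and dist: "\<And>j. distr M borel (\<theta> j) = uniform_measure lborel {0..1}"
begin

lemma meas[measurable]: "\<theta> j \<in> borel_measurable M"
  using ind unfolding indep_vars_def by auto

lemma AE01: "AE \<omega> in M. \<forall>j. 0 \<le> \<theta> j \<omega> \<and> \<theta> j \<omega> \<le> 1"
proof -
  have "AE \<omega> in M. \<theta> j \<omega> \<in> {0..1}" for j
  proof -
    have "AE x in distr M borel (\<theta> j). x \<in> {0..1}" unfolding dist by (rule AE_uniform_measureI) auto
    then show ?thesis by (rule AE_distrD[OF meas])
  qed
  then show ?thesis by (subst AE_all_countable) auto
qed

lemma E_powr: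
  assumes b: "b > 0"
  shows "(\<integral>\<^sup>+\<omega>. ennreal (\<theta> j \<omega> powr b) \<partial>M) = ennreal (1 / (b + 1))"
proof -
  have "(\<integral>\<^sup>+\<omega>. ennreal (\<theta> j \<omega> powr b) \<partial>M) = (\<integral>\<^sup>+x. ennreal (x powr b) \<partial>distr M borel (\<theta> j))"
    by (subst nn_integral_distr) auto
  also have "\<dots> = (\<integral>\<^sup>+x. ennreal (x powr b) * indicator {0..1} x \<partial>lborel) / emeasure lborel {0..1::real}"
    unfolding dist by (rule nn_integral_uniform_measure) auto
  also have "(\<integral>\<^sup>+x. ennreal (x powr b) * indicator {0..1} x \<partial>lborel) = (\<integral>\<^sup>+x. ennreal (x powr b * indicator {0..1} x) \<partial>lborel)"
    by (intro nn_integral_cong) (auto simp: indicator_def)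
  also have "\<dots> = ennreal (1 / (b + 1))"
  proof (rule nn_integral_has_integral_lborel)
    have "((\<lambda>x. x powr b) has_integral (1 powr (b + 1) / (b + 1))) {0..1::real}"
      by (rule has_integral_powr_from_0) (use b in auto)
    then have "((\<lambda>x. if x \<in> {0..1::real} then x powr b else 0) has_integral (1 / (b + 1))) UNIV"
      by (subst has_integral_restrict_UNIV) simp
    moreover have "(\<lambda>x. if x \<in> {0..1::real} then x powr b else 0) = (\<lambda>x. x powr b * indicator {0..1} x)"
      by (auto simp: indicator_def)
    ultimately show "((\<lambda>x. x powr b * indicator {0..1} x) has_integral (1 / (b + 1))) UNIV" by simp
  qed auto
  finally show ?thesis by (simp add: divide_ennreal_def)
qed

lemma E_prod:
  assumes b: "b > 0" and ij: "i \<noteq> j"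
  shows "(\<integral>\<^sup>+\<omega>. ennreal (\<theta> i \<omega> powr b * \<theta> j \<omega> powr b) \<partial>M) = ennreal (1 / (b + 1)) * ennreal (1 / (b + 1))"
proof -
  have "indep_vars (\<lambda>_. borel) (\<lambda>l \<omega>. ennreal (\<theta> l \<omega> powr b)) UNIV"
    by (rule indep_vars_compose2[OF ind]) auto
  then have ind2: "indep_vars (\<lambda>_. borel) (\<lambda>l \<omega>. ennreal (\<theta> l \<omega> powr b)) {i, j}"
    by (rule indep_vars_subset) auto
  have "(\<integral>\<^sup>+\<omega>. (\<Prod>l\<in>{i,j}. ennreal (\<theta> l \<omega> powr b)) \<partial>M) = (\<Prod>l\<in>{i,j}. \<integral>\<^sup>+\<omega>. ennreal (\<theta> l \<omega> powr b) \<partial>M)"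
    by (rule indep_vars_nn_integral[OF _ ind2]) auto
  then have "(\<integral>\<^sup>+\<omega>. ennreal (\<theta> i \<omega> powr b) * ennreal (\<theta> j \<omega> powr b) \<partial>M) = ennreal (1 / (b + 1)) * ennreal (1 / (b + 1))"
    using ij by (simp add: E_powr[OF b])
  then show ?thesis by (simp add: ennreal_mult)
qed

lemma term_bound:
  assumes b: "b > 0"
  shows "(\<integral>\<^sup>+\<omega>. ennreal (\<theta> i \<omega> powr b * \<theta> j \<omega> powr b) \<partial>M)
     \<le> ennreal ((1 / (b + 1))^2 + (if i = j then 1 / (b + 1) else 0))"
proof (cases "i = j")
  case True
  have "(\<integral>\<^sup>+\<omega>. ennreal (\<theta> i \<omega> powr b * \<theta> i \<omega> powr b) \<partial>M) \<le> (\<integral>\<^sup>+\<omega>. ennreal (\<theta> i \<omega> powr b) \<partial>M)"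
  proof (rule nn_integral_mono_AE)
    show "AE \<omega> in M. ennreal (\<theta> i \<omega> powr b * \<theta> i \<omega> powr b) \<le> ennreal (\<theta> i \<omega> powr b)"
      using AE01
    proof eventually_elim
      case (elim \<omega>)
      then have "\<theta> i \<omega> powr b \<le> 1" using b by (intro powr_le1) auto
      then show ?case by (intro ennreal_leI mult_left_le) auto
    qed
  qed
  also have "\<dots> = ennreal (1 / (b + 1))" by (rule E_powr[OF b])
  also have "\<dots> \<le> ennreal ((1 / (b + 1))^2 + (if i = j then 1 / (b + 1) else 0))"
    using True b by (intro ennreal_leI) auto
  finally show ?thesis using True by simp
next
  case False
  then show ?thesis using b by (simp add: E_prod ennreal_mult[symmetric] power2_eq_square)
qed

lemma Ak_bound:
  assumes b: "b > 0" and k: "k \<ge> 1"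
  shows "(\<integral>\<^sup>+\<omega>. ennreal (((\<Sum>j=1..k. \<theta> j \<omega> powr b) / real k)^2) \<partial>M)
     \<le> ennreal ((1 / (b + 1))^2 + (1 / (b + 1)) / real k)"
proof -
  define q where "q = 1 / (b + 1)"
  have q: "q > 0" using b by (simp add: q_def)
  define c where "c = 1 / (real k)^2"
  have c: "c \<ge> 0" by (simp add: c_def)
  have pw: "ennreal (((\<Sum>j=1..k. \<theta> j \<omega> powr b) / real k)^2)
      = (\<Sum>i=1..k. \<Sum>j=1..k. ennreal (\<theta> i \<omega> powr b * \<theta> j \<omega> powr b)) * ennreal c" for \<omega>
  proof -
    have "((\<Sum>j=1..k. \<theta> j \<omega> powr b) / real k)^2 = (\<Sum>i=1..k. \<Sum>j=1..k. \<theta> i \<omega> powr b * \<theta> j \<omega> powr b) * c"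
      by (simp add: c_def power_divide power2_eq_square sum_product)
    moreover have "ennreal ((\<Sum>i=1..k. \<Sum>j=1..k. \<theta> i \<omega> powr b * \<theta> j \<omega> powr b) * c)
       = ennreal (\<Sum>i=1..k. \<Sum>j=1..k. \<theta> i \<omega> powr b * \<theta> j \<omega> powr b) * ennreal c"
      using c by (intro ennreal_mult sum_nonneg) auto
    moreover have "ennreal (\<Sum>i=1..k. \<Sum>j=1..k. \<theta> i \<omega> powr b * \<theta> j \<omega> powr b)
       = (\<Sum>i=1..k. \<Sum>j=1..k. ennreal (\<theta> i \<omega> powr b * \<theta> j \<omega> powr b))"
      by (subst sum_ennreal; simp add: sum_nonneg)+
    ultimately show ?thesis by simp
  qed
  have "(\<integral>\<^sup>+\<omega>. ennreal (((\<Sum>j=1..k. \<theta> j \<omega> powr b) / real k)^2) \<partial>M)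
      = (\<integral>\<^sup>+\<omega>. (\<Sum>i=1..k. \<Sum>j=1..k. ennreal (\<theta> i \<omega> powr b * \<theta> j \<omega> powr b)) \<partial>M) * ennreal c"
    unfolding pw by (rule nn_integral_multc) auto
  also have "(\<integral>\<^sup>+\<omega>. (\<Sum>i=1..k. \<Sum>j=1..k. ennreal (\<theta> i \<omega> powr b * \<theta> j \<omega> powr b)) \<partial>M)
      = (\<Sum>i=1..k. \<Sum>j=1..k. \<integral>\<^sup>+\<omega>. ennreal (\<theta> i \<omega> powr b * \<theta> j \<omega> powr b) \<partial>M)"
  proof -
    have "(\<integral>\<^sup>+\<omega>. (\<Sum>i=1..k. \<Sum>j=1..k. ennreal (\<theta> i \<omega> powr b * \<theta> j \<omega> powr b)) \<partial>M)
      = (\<Sum>i=1..k. \<integral>\<^sup>+\<omega>. (\<Sum>j=1..k. ennreal (\<theta> i \<omega> powr b * \<theta> j \<omega> powr b)) \<partial>M)"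
      by (rule nn_integral_sum) measurable
    also have "\<dots> = (\<Sum>i=1..k. \<Sum>j=1..k. \<integral>\<^sup>+\<omega>. ennreal (\<theta> i \<omega> powr b * \<theta> j \<omega> powr b) \<partial>M)"
      by (intro sum.cong refl nn_integral_sum) measurable
    finally show ?thesis .
  qed
  also have "\<dots> \<le> (\<Sum>i=1..k. \<Sum>j=1..k. ennreal (q^2 + (if i = j then q else 0)))"
    unfolding q_def by (intro sum_mono term_bound b)
  also have "\<dots> = ennreal (\<Sum>i=1..k. \<Sum>j=1..k. (q^2 + (if i = j then q else 0)))"
  proof -
    have e1: "\<And>i. (\<Sum>j=1..k. ennreal (q^2 + (if i = j then q else 0))) = ennreal (\<Sum>j=1..k. (q^2 + (if i = j then q else 0)))"
      by (rule sum_ennreal) (use q in auto)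
    show ?thesis unfolding e1 by (rule sum_ennreal) (use q in \<open>auto intro!: sum_nonneg\<close>)
  qed
  also have "(\<Sum>i=1..k. \<Sum>j=1..k. (q^2 + (if i = j then q else 0))) = real k * real k * q^2 + real k * q"
    by (simp add: sum.distrib algebra_simps)
  finally have "(\<integral>\<^sup>+\<omega>. ennreal (((\<Sum>j=1..k. \<theta> j \<omega> powr b) / real k)^2) \<partial>M)
     \<le> ennreal (real k * real k * q^2 + real k * q) * ennreal c"
    using mult_right_mono[of _ _ "ennreal c"] by (meson zero_le)
  also have "\<dots> = ennreal ((real k * real k * q^2 + real k * q) * c)"
    using c q by (simp add: ennreal_mult)
  also have "(real k * real k * q^2 + real k * q) * c = q^2 + q / real k"
    using k by (simp add: c_def field_simps power2_eq_square)
  finally show ?thesis by (simp add: q_def)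
qed

lemma B_summable:
  fixes a :: "nat \<Rightarrow> real"
  assumes apos: "\<And>k. k \<ge> 1 \<Longrightarrow> 0 < a k"
    and alim: "(\<lambda>k. a k / real k) \<longlonglongrightarrow> D" and D: "D > 0"
  shows "summable (\<lambda>k. if k = 0 then 0 else (1 / (a k + 1))^2 + (1 / (a k + 1)) / real k)"
proof (rule summable_comparison_test_ev)
  define d where "d = D / 2"
  have d: "d > 0" "d < D" using D by (auto simp: d_def)
  show "summable (\<lambda>k. (1 / d^2 + 1 / d) * inverse (real k ^ 2))"
    by (intro summable_mult inverse_power_summable) auto
  have "eventually (\<lambda>k. a k / real k > d) sequentially"
    by (rule order_tendstoD(1)[OF alim d(2)])
  then show "eventually (\<lambda>k. norm (if k = 0 then 0 else (1 / (a k + 1))^2 + (1 / (a k + 1)) / real k)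
      \<le> (1 / d^2 + 1 / d) * inverse (real k ^ 2)) sequentially"
    using eventually_ge_at_top[of 1]
  proof eventually_elim
    case (elim k)
    have kp: "real k > 0" using elim by simp
    have ak: "a k > d * real k" using elim kp by (simp add: field_simps)
    have dk: "d * real k > 0" using d kp by simp
    have q0: "0 \<le> 1 / (a k + 1)" using apos[of k] elim by simp
    have q: "1 / (a k + 1) \<le> 1 / (d * real k)"
      using ak dk by (intro divide_left_mono) auto
    have q2: "(1 / (a k + 1))^2 \<le> (1 / (d * real k))^2"
      using q q0 by (intro power_mono) auto
    have q3: "(1 / (a k + 1)) / real k \<le> (1 / (d * real k)) / real k"
      using q kp by (intro divide_right_mono) auto
    have eq: "(1 / (d * real k))^2 + (1 / (d * real k)) / real k = (1 / d^2 + 1 / d) * inverse (real k ^ 2)"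
      using d kp by (simp add: field_simps power2_eq_square)
    have nn: "0 \<le> (1 / (a k + 1))^2 + (1 / (a k + 1)) / real k" using q0 kp by simp
    show ?case using elim q2 q3 eq nn by simp
  qed
qed


lemma AE_A_lim:
  fixes a :: "nat \<Rightarrow> real"
  assumes apos: "\<And>k. k \<ge> 1 \<Longrightarrow> 0 < a k"
    and alim: "(\<lambda>k. a k / real k) \<longlonglongrightarrow> D" and D: "D > 0"
  shows "AE \<omega> in M. (\<lambda>k. (\<Sum>j=1..k. \<theta> j \<omega> powr a k) / real k) \<longlonglongrightarrow> 0"
proof -
  define A where "A k \<omega> = (\<Sum>j=1..k. \<theta> j \<omega> powr a k) / real k" for k \<omega>
  define B where "B k = (if k = 0 then 0 else (1 / (a k + 1))^2 + (1 / (a k + 1)) / real k)" for k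
  have Bs: "summable B" unfolding B_def by (rule B_summable[OF apos alim D])
  have B0: "B k \<ge> 0" for k using apos[of k] by (auto simp: B_def)
  have bound: "(\<integral>\<^sup>+\<omega>. ennreal ((A k \<omega>)^2) \<partial>M) \<le> ennreal (B k)" for k
  proof (cases "k = 0")
    case True then show ?thesis by (simp add: A_def B_def)
  next
    case False
    then show ?thesis unfolding A_def B_def using Ak_bound[of "a k" k] apos[of k] by simp
  qed
  have meas: "(\<lambda>\<omega>. ennreal ((A k \<omega>)^2)) \<in> borel_measurable M" for k
    unfolding A_def by measurable
  have "(\<integral>\<^sup>+\<omega>. (\<Sum>k. ennreal ((A k \<omega>)^2)) \<partial>M) = (\<Sum>k. \<integral>\<^sup>+\<omega>. ennreal ((A k \<omega>)^2) \<partial>M)"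
    by (rule nn_integral_suminf) (rule meas)
  also have "\<dots> \<le> (\<Sum>k. ennreal (B k))"
    by (intro suminf_le bound summableI)
  also have "\<dots> = ennreal (\<Sum>k. B k)" by (rule suminf_ennreal2[OF B0 Bs])
  also have "\<dots> < \<infinity>" by simp
  finally have "(\<integral>\<^sup>+\<omega>. (\<Sum>k. ennreal ((A k \<omega>)^2)) \<partial>M) \<noteq> \<infinity>"
    by simp
  then have "AE \<omega> in M. (\<Sum>k. ennreal ((A k \<omega>)^2)) \<noteq> \<infinity>"
    by (intro nn_integral_PInf_AE) (use meas in auto)
  then show ?thesis
  proof eventually_elim
    case (elim \<omega>)
    have "summable (\<lambda>k. (A k \<omega>)^2)"
      by (rule summable_suminf_not_top) (use elim in auto)
    then have "(\<lambda>k. (A k \<omega>)^2) \<longlonglongrightarrow> 0" by (rule summable_LIMSEQ_zero)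
    then have "(\<lambda>k. sqrt ((A k \<omega>)^2)) \<longlonglongrightarrow> sqrt 0" by (rule tendsto_real_sqrt)
    then have "(\<lambda>k. \<bar>A k \<omega>\<bar>) \<longlonglongrightarrow> 0" by simp
    then show ?case unfolding A_def[symmetric] by (rule tendsto_rabs_zero_cancel)
  qed
qed

end


theorem lemma1:
  fixes M :: "'a measure" and \<theta> :: "nat \<Rightarrow> 'a \<Rightarrow> real"
    and \<alpha> :: "nat \<Rightarrow> real" and \<Delta> \<rho> :: real and \<rho>hat :: "nat \<Rightarrow> real"
  assumes "prob_space M"
    and "prob_space.indep_vars M (\<lambda>_. borel) \<theta> UNIV"
    and "\<And>j. distr M borel (\<theta> j) = uniform_measure lborel {0..1}"
    and "\<And>k. k \<ge> 1 \<Longrightarrow> 0 < \<alpha> k \<and> \<alpha> k \<le> real k"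
    and "(\<lambda>k. \<alpha> k / real k) \<longlonglongrightarrow> \<Delta>" and "0 < \<Delta>" and "\<Delta> \<le> 1"
    and "\<rho> < 0" and "\<rho>hat \<longlonglongrightarrow> \<rho>"
  shows "AE \<omega> in M.
     (\<lambda>k. S1 \<alpha> (\<rho>hat k) (\<lambda>j. \<theta> j \<omega>) k) \<longlonglongrightarrow> 1 / (1 - \<rho>) \<and>
     (\<lambda>k. S2 \<alpha> (\<rho>hat k) (\<lambda>j. \<theta> j \<omega>) k) \<longlonglongrightarrow> \<rho>^2 / ((1 - 2*\<rho>) * (1 - \<rho>)^2) \<and>
     (\<lambda>k. Sdot \<alpha> (\<rho>hat k) (\<lambda>j. \<theta> j \<omega>) k) \<longlonglongrightarrow> 0 \<and>
     (\<lambda>k. Sddot \<alpha> (\<rho>hat k) (\<lambda>j. \<theta> j \<omega>) k) \<longlonglongrightarrow> 0"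
proof -
  interpret unif_setup M \<theta> using assms(1,2,3) by (simp add: unif_setup_def unif_setup_axioms_def)
  have apos: "\<And>k. k \<ge> 1 \<Longrightarrow> 0 < \<alpha> k" using assms(4) by auto
  have "AE \<omega> in M. (\<forall>j. 0 \<le> \<theta> j \<omega> \<and> \<theta> j \<omega> \<le> 1) \<and>
      (\<lambda>k. (\<Sum>j=1..k. \<theta> j \<omega> powr \<alpha> k) / real k) \<longlonglongrightarrow> 0"
  proof -
    have "AE \<omega> in M. (\<lambda>k. (\<Sum>j=1..k. \<theta> j \<omega> powr \<alpha> k) / real k) \<longlonglongrightarrow> 0"
      by (rule AE_A_lim[where D=\<Delta>]) (use apos assms(5,6) in auto)
    with AE01 show ?thesis by eventually_elim auto
  qed
  then show ?thesis
  proof eventually_elim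
    case (elim \<omega>)
    interpret detsetup "\<lambda>j. \<theta> j \<omega>" \<alpha> using elim apos by unfold_locales auto
    show ?case by (rule det_main[OF assms(9) assms(8)])
  qed
qed

end
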